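(* Let $n\ge2$ and let $(1,n,f_2,\dots,f_k)$ with $k\le\lfloor\frac{n-1}2\rfloor$ be a $K$-sequence. Then there is a proper ideal $\Delta\subset B_n$ such that $\mathrm{Bier}(B_n,\Delta)$ has exactly $2n$ vertices and $g_i(\mathrm{Bier}(B_n,\Delta))=f_i$ for $0\le i\le k$ (with $f_0=1,f_1=n$) and $g_i(\mathrm{Bier}(B_n,\Delta))=0$ for $k<i\le\lfloor\frac{n-1}2\rfloor$.
   Context: $B_n$ is the Boolean lattice of subsets of $[1,n]$. A proper ideal $\Delta\subset B_n$ is a nonempty family of subsets of $[1,n]$ closed under taking subsets with $[1,n]\notin\Delta$. The Bier sphere $\mathrm{Bier}(B_n,\Delta)$ is the simplicial complex whose faces are the pairs $(B,C)$ with $B\subsetneq C\subseteq[1,n]$, $B\in\Delta$, $C\notin\Delta$, with $(B',C')$ a face of $(B,C)$ iff $B'\subseteq B$ and $C\subseteq C'$; concretely $(B,C)$ is the vertex set $B\sqcup\{\bar d: d\notin C\}$ on $[1,n]\sqcup\{\bar1,\dots,\bar n\}$, and the face $(B,C)$ has $|B|+n-|C|$ vertices; all facets have $n-1$ vertices. For such a complex $\Gamma$, $f_j(\Gamma)$ is the number of faces with $j$ vertices, $h_i(\Gamma):=\sum_{j=0}^{n-1}(-1)^{i+j}\binom{n-1-j}{n-1-i}f_j(\Gamma)$ ($0\le i\le n-1$; $h_i:=0$ otherwise), and $g_i(\Gamma):=h_i(\Gamma)-h_{i-1}(\Gamma)$. A $K$-sequence is a sequence that is the $f$-vector (numbers of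 faces of each cardinality, starting with the empty face) of some finite simplicial complex. *)

theory Defs
  imports Main
begin

definition proper_ideal :: "nat \<Rightarrow> nat set set \<Rightarrow> bool" where
  "proper_ideal n \<Delta> \<longleftrightarrow>
     \<Delta> \<noteq> {} \<and> (\<forall>A\<in>\<Delta>. A \<subseteq> {1..n}) \<and>
     (\<forall>A\<in>\<Delta>. \<forall>B. B \<subseteq> A \<longrightarrow> B \<in> \<Delta>) \<and> {1..n} \<notin> \<Delta>"

text \<open>Faces of Bier(B_n, Delta) as vertex sets on [1,n] + [1,n]-bar:
  the face (B,C) has vertex set B (tagged Inl) plus the complement of C (tagged Inr).\<close>
definition bier_faces :: "nat \<Rightarrow> nat set set \<Rightarrow> (nat + nat) set set" where
  "bier_faces n \<Delta> =
     {Inl ` B \<union> Inr ` ({1..n} - C) | B C.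
        B \<subset> C \<and> C \<subseteq> {1..n} \<and> B \<in> \<Delta> \<and> C \<notin> \<Delta>}"

definition bier_f :: "nat \<Rightarrow> nat set set \<Rightarrow> nat \<Rightarrow> nat" where
  "bier_f n \<Delta> j = card {F \<in> bier_faces n \<Delta>. card F = j}"

definition bier_h :: "nat \<Rightarrow> nat set set \<Rightarrow> nat \<Rightarrow> int" where
  "bier_h n \<Delta> i =
     (if i \<le> n - 1 then
        (\<Sum>j = 0..n - 1. (-1) ^ (i + j) * int ((n - 1 - j) choose (n - 1 - i)) * int (bier_f n \<Delta> j))
      else 0)"

fun bier_g :: "nat \<Rightarrow> nat set set \<Rightarrow> nat \<Rightarrow> int" where
  "bier_g n \<Delta> 0 = bier_h n \<Delta> 0"
| "bier_g n \<Delta> (Suc i) = bier_h n \<Delta> (Suc i) - bier_h n \<Delta> i"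

definition simplicial_complex :: "nat set set \<Rightarrow> bool" where
  "simplicial_complex K \<longleftrightarrow> finite K \<and> {} \<in> K \<and> (\<forall>F\<in>K. finite F) \<and>
     (\<forall>F\<in>K. \<forall>G. G \<subseteq> F \<longrightarrow> G \<in> K)"

text \<open>(f 0, ..., f k) is a K-sequence: the f-vector of some finite simplicial complex,
  i.e. f j faces with j vertices for j \<le> k, and no faces with more than k vertices.\<close>
definition K_sequence :: "nat \<Rightarrow> (nat \<Rightarrow> nat) \<Rightarrow> bool" where
  "K_sequence k f \<longleftrightarrow> (\<exists>K. simplicial_complex K \<and>
      (\<forall>j\<le>k. card {F\<in>K. card F = j} = f j) \<and> (\<forall>F\<in>K. card F \<le> k))"

end

theory Submission imports Defs begin
definition PP :: "nat \<Rightarrow> nat set set \<Rightarrow> (nat set \<times> nat set) set" where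
  "PP n \<Delta> = {(B,C). B \<in> \<Delta> \<and> C \<subseteq> {1..n} \<and> C \<notin> \<Delta> \<and> B \<subseteq> C}"

definition ww :: "nat \<Rightarrow> nat set \<times> nat set \<Rightarrow> nat" where
  "ww n p = card (fst p) + n - card (snd p)"

definition phi :: "nat \<Rightarrow> nat set \<times> nat set \<Rightarrow> (nat + nat) set" where
  "phi n p = Inl ` fst p \<union> Inr ` ({1..n} - snd p)"

lemma faces_eq:
  assumes "proper_ideal n \<Delta>"
  shows "bier_faces n \<Delta> = phi n ` PP n \<Delta>"
  unfolding bier_faces_def PP_def phi_def
  by (auto simp: image_iff) (metis psubset_eq)+

lemma PP_sub: "PP n \<Delta> \<subseteq> Pow {1..n} \<times> Pow {1..n}" if "proper_ideal n \<Delta>"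
  using that unfolding PP_def proper_ideal_def by auto

lemma finite_PP: "proper_ideal n \<Delta> \<Longrightarrow> finite (PP n \<Delta>)"
  by (rule finite_subset[OF PP_sub]) auto

lemma inj_phi: "inj_on (phi n) (PP n \<Delta>)"
proof (rule inj_onI)
  fix p q assume p: "p \<in> PP n \<Delta>" and q: "q \<in> PP n \<Delta>" and e: "phi n p = phi n q"
  have "fst p = fst q"
  proof -
    have "fst p = Inl -` phi n p" "fst q = Inl -` phi n q" unfolding phi_def by auto
    then show ?thesis using e by simp
  qed
  moreover have "{1..n} - snd p = {1..n} - snd q"
  proof -
    have "{1..n} - snd p = Inr -` phi n p" "{1..n} - snd q = Inr -` phi n q" unfolding phi_def by auto
    then show ?thesis using e by simp
  qed
  then have "snd p = snd q" using p q unfolding PP_def by auto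
  ultimately show "p = q" by (simp add: prod_eq_iff)
qed

lemma card_phi:
  assumes "proper_ideal n \<Delta>" "p \<in> PP n \<Delta>"
  shows "card (phi n p) = ww n p"
proof -
  obtain B C where p: "p = (B,C)" by fastforce
  have B: "B \<subseteq> {1..n}" and C: "C \<subseteq> {1..n}" using PP_sub[OF assms(1)] assms(2) p by auto
  then have fB: "finite B" using finite_subset by blast
  have "card (phi n p) = card (Inl ` B :: (nat+nat) set) + card (Inr ` ({1..n} - C) :: (nat+nat) set)"
    unfolding phi_def p using fB by (subst card_Un_disjoint) auto
  also have "\<dots> = card B + card ({1..n} - C)" by (simp add: card_image)
  also have "card ({1..n} - C) = n - card C" using C by (simp add: card_Diff_subset finite_subset)
  finally show ?thesis unfolding ww_def p using C card_mono[OF _ C] by simp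
qed

lemma ww_le:
  assumes "proper_ideal n \<Delta>" "p \<in> PP n \<Delta>"
  shows "ww n p \<le> n - 1"
proof -
  obtain B C where p: "p = (B,C)" by fastforce
  have C: "C \<subseteq> {1..n}" and BC: "B \<subseteq> C" "B \<noteq> C" using assms p unfolding PP_def by auto
  have "finite C" using C finite_subset by blast
  then have "card B < card C" using BC by (simp add: psubset_card_mono psubset_eq)
  moreover have "card C \<le> n" using card_mono[OF _ C] by simp
  ultimately show ?thesis unfolding ww_def p by simp
qed

lemma bier_f_PP:
  assumes "proper_ideal n \<Delta>"
  shows "bier_f n \<Delta> j = card {p \<in> PP n \<Delta>. ww n p = j}"
proof -
  have "{F \<in> bier_faces n \<Delta>. card F = j} = phi n ` {p \<in> PP n \<Delta>. ww n p = j}"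
    using faces_eq[OF assms] card_phi[OF assms] by auto
  moreover have "inj_on (phi n) {p \<in> PP n \<Delta>. ww n p = j}"
    by (rule inj_on_subset[OF inj_phi]) auto
  ultimately show ?thesis unfolding bier_f_def by (simp add: card_image)
qed

lemma h_PP:
  assumes "proper_ideal n \<Delta>" "i \<le> n - 1"
  shows "bier_h n \<Delta> i = (\<Sum>p\<in>PP n \<Delta>. (-1)^(i + ww n p) * int ((n - 1 - ww n p) choose (n - 1 - i)))"
proof -
  define c where "c j = (-1::int)^(i + j) * int ((n - 1 - j) choose (n - 1 - i))" for j
  have "bier_h n \<Delta> i = (\<Sum>j=0..n-1. c j * int (card {p \<in> PP n \<Delta>. ww n p = j}))"
    using assms unfolding bier_h_def c_def by (simp add: bier_f_PP[OF assms(1)])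
  also have "\<dots> = (\<Sum>j=0..n-1. \<Sum>p\<in>{p \<in> PP n \<Delta>. ww n p = j}. c (ww n p))"
    by (intro sum.cong) auto
  also have "\<dots> = (\<Sum>p\<in>PP n \<Delta>. c (ww n p))"
    by (rule sum.group) (use finite_PP[OF assms(1)] ww_le[OF assms(1)] in auto)
  finally show ?thesis unfolding c_def .
qed

lemma T_id:
  "(\<Sum>j\<le>N. int (N choose j) * (-1::int)^(j+r) * int (j choose r)) = (if N = r then 1 else 0)"
proof (cases "r \<le> N")
  case False
  then show ?thesis by (intro trans[OF sum.neutral]) auto
next
  case True
  define \<phi> where "\<phi> j = int (N choose j) * (-1::int)^(j+r) * int (j choose r)" for j
  have "(\<Sum>j\<le>N. \<phi> j) = (\<Sum>j\<in>{r..N}. \<phi> j)"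
    by (rule sum.mono_neutral_right) (auto simp: \<phi>_def)
  also have "\<dots> = (\<Sum>i\<in>{0..N-r}. \<phi> (i+r))"
    using sum.shift_bounds_cl_nat_ivl[of \<phi> 0 r "N-r"] True by simp
  also have "\<dots> = (\<Sum>i\<le>N-r. of_nat (N choose r) * ((-1)^i * of_nat ((N-r) choose i)))"
  proof (rule sum.cong)
    fix i assume "i \<in> {..N-r}"
    then have "i + r \<le> N" using True by auto
    have "(N choose (i+r)) * ((i+r) choose r) = (N choose r) * ((N-r) choose i)"
      using choose_mult[of r "i+r" N] \<open>i+r \<le> N\<close> by simp
    then have "int (N choose (i+r)) * int ((i+r) choose r) = int (N choose r) * int ((N-r) choose i)"
      by (metis of_nat_mult)
    moreover have "(-1::int)^(i+r+r) = (-1)^i"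
      by (simp add: power_add flip: mult_2 power_mult)
    ultimately show "\<phi> (i+r) = of_nat (N choose r) * ((-1)^i * of_nat ((N-r) choose i))"
      unfolding \<phi>_def by (metis (no_types, lifting) mult.assoc mult.commute)
  qed (auto simp: atLeast0AtMost)
  also have "\<dots> = (if N = r then 1 else 0)"
  proof (cases "N = r")
    case False
    then have "N - r > 0" using True by simp
    then show ?thesis
      using choose_alternating_sum[OF \<open>N - r > 0\<close>, where 'a=int] False
      by (simp flip: sum_distrib_left)
  qed simp
  finally show ?thesis unfolding \<phi>_def .
qed

lemma S_id:
  "(\<Sum>j<N. int (N choose Suc j) * (-1::int)^(j+r) * int (j choose r)) = (if r < N then 1 else 0)"
proof (induction N)
  case 0
  then show ?case by simp
next
  case (Suc N)
  have "(\<Sum>j<Suc N. int (Suc N choose Suc j) * (-1::int)^(j+r) * int (j choose r))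
     = (\<Sum>j<Suc N. int (N choose Suc j) * (-1::int)^(j+r) * int (j choose r))
       + (\<Sum>j<Suc N. int (N choose j) * (-1::int)^(j+r) * int (j choose r))"
    by (simp add: sum.distrib[symmetric] algebra_simps)
  also have "(\<Sum>j<Suc N. int (N choose Suc j) * (-1::int)^(j+r) * int (j choose r))
      = (\<Sum>j<N. int (N choose Suc j) * (-1::int)^(j+r) * int (j choose r))" by simp
  also have "(\<Sum>j<Suc N. int (N choose j) * (-1::int)^(j+r) * int (j choose r)) = (if N = r then 1 else 0)"
    using T_id[of N r] by (simp add: lessThan_Suc_atMost)
  finally show ?case using Suc.IH by auto
qed


lemma neg1_pow_eq: "even (a + b) \<Longrightarrow> (-1::int)^a = (-1)^b"
  by (simp add: minus_one_power_iff)

lemma h_special: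
  assumes pi: "proper_ideal n \<Delta>" and kb: "\<forall>A\<in>\<Delta>. card A \<le> k" and k: "k \<le> (n-1) div 2"
    and i: "i \<le> (n-1) div 2"
  shows "bier_h n \<Delta> i = int (card {B\<in>\<Delta>. card B \<le> i})"
proof -
  define r where "r = n - 1 - i"
  have ir: "i \<le> n - 1" using i by simp
  have kr: "k \<le> r" using k i unfolding r_def by simp
  define t where "t p = (-1::int)^(i + ww n p) * int ((n - 1 - ww n p) choose r)" for p
  define Cs where "Cs B = {C. C \<subseteq> {1..n} \<and> C \<notin> \<Delta> \<and> B \<subseteq> C}" for B
  have finD: "finite \<Delta>"
    using pi unfolding proper_ideal_def by (meson Pow_iff finite_Pow_iff finite_atLeastAtMost finite_subset subsetI)
  have PPS: "PP n \<Delta> = Sigma \<Delta> Cs" unfolding PP_def Cs_def by auto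
  have "bier_h n \<Delta> i = (\<Sum>p\<in>PP n \<Delta>. t p)"
    unfolding t_def r_def using h_PP[OF pi ir] .
  also have "\<dots> = (\<Sum>B\<in>\<Delta>. \<Sum>C\<in>Cs B. t (B,C))"
  proof -
    have fC: "\<forall>B\<in>\<Delta>. finite (Cs B)" unfolding Cs_def
      by (auto intro: finite_subset[of _ "Pow {1..n}"])
    show ?thesis unfolding PPS using sum.Sigma[OF finD fC, of "\<lambda>B C. t (B,C)"] by simp
  qed
  also have "\<dots> = (\<Sum>B\<in>\<Delta>. if card B \<le> i then 1 else 0)"
  proof (rule sum.cong[OF refl])
    fix B assume B: "B \<in> \<Delta>"
    have Bn: "B \<subseteq> {1..n}" using B pi unfolding proper_ideal_def by auto
    have fB: "finite B" using Bn finite_subset by blast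
    define S where "S = {1..n} - B"
    define N where "N = card S"
    have finS: "finite S" unfolding S_def by auto
    have NS: "N = n - card B" unfolding N_def S_def using Bn by (simp add: card_Diff_subset fB)
    have cBn: "card B \<le> n" using card_mono[OF _ Bn] by simp
    define Big where "Big = {C. C \<subseteq> {1..n} \<and> B \<subseteq> C \<and> C \<noteq> B}"
    have "(\<Sum>C\<in>Cs B. t (B,C)) = (\<Sum>C\<in>Big. t (B,C))"
    proof (rule sum.mono_neutral_left)
      show "finite Big" unfolding Big_def by (rule finite_subset[of _ "Pow {1..n}"]) auto
      show "Cs B \<subseteq> Big" unfolding Cs_def Big_def using B by auto
      show "\<forall>C\<in>Big - Cs B. t (B, C) = 0"
      proof
        fix C assume "C \<in> Big - Cs B"
        then have C: "C \<subseteq> {1..n}" "B \<subseteq> C" "C \<noteq> B" "C \<in> \<Delta>" unfolding Big_def Cs_def by auto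
        have "card C \<le> k" using kb C(4) by auto
        have "finite C" using C(1) finite_subset by blast
        then have "card B < card C" using C by (simp add: psubset_card_mono psubset_eq)
        have "card C \<le> n" using card_mono[OF _ C(1)] by simp
        then have "n - 1 - ww n (B,C) < r" unfolding ww_def
          using \<open>card B < card C\<close> \<open>card C \<le> k\<close> kr by simp
        then show "t (B, C) = 0" unfolding t_def by simp
      qed
    qed
    also have "\<dots> = (\<Sum>D\<in>{D. D \<subseteq> S \<and> D \<noteq> {}}. t (B, B \<union> D))"
    proof (rule sum.reindex_bij_witness[of _ "\<lambda>D. B \<union> D" "\<lambda>C. C - B"])
    qed (use Bn in \<open>auto simp: Big_def S_def Un_absorb1\<close>)
    also have "\<dots> = (\<Sum>D\<in>{D. D \<subseteq> S \<and> D \<noteq> {}}. (-1::int)^(card D - 1 + r) * int ((card D - 1) choose r))"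
    proof (rule sum.cong[OF refl])
      fix D assume D: "D \<in> {D. D \<subseteq> S \<and> D \<noteq> {}}"
      have fD: "finite D" using D unfolding S_def by (auto intro: finite_subset)
      have cD: "card D \<ge> 1" using D fD by (simp add: Suc_le_eq card_gt_0_iff)
      have "card D \<le> N" unfolding N_def using D by (intro card_mono) (auto simp: S_def)
      have cU: "card (B \<union> D) = card B + card D"
        using D fB fD by (subst card_Un_disjoint) (auto simp: S_def)
      have w: "ww n (B, B \<union> D) = n - card D" unfolding ww_def using cU cBn \<open>card D \<le> N\<close> NS by simp
      have "n - 1 - ww n (B, B \<union> D) = card D - 1" using w cD \<open>card D \<le> N\<close> NS by simp
      moreover have "(-1::int)^(i + ww n (B, B \<union> D)) = (-1)^(card D - 1 + r)"
        by (rule neg1_pow_eq) (use w cD \<open>card D \<le> N\<close> NS ir in \<open>simp add: r_def\<close>)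
      ultimately show "t (B, B \<union> D) = (-1::int)^(card D - 1 + r) * int ((card D - 1) choose r)"
        unfolding t_def by simp
    qed
    also have "\<dots> = (\<Sum>j<N. \<Sum>D\<in>{D \<in> {D. D \<subseteq> S \<and> D \<noteq> {}}. card D - 1 = j}. (-1::int)^(card D - 1 + r) * int ((card D - 1) choose r))"
    proof (rule sum.group[symmetric])
      show "finite {D. D \<subseteq> S \<and> D \<noteq> {}}" unfolding S_def by auto
      show "(\<lambda>D. card D - 1) ` {D. D \<subseteq> S \<and> D \<noteq> {}} \<subseteq> {..<N}"
      proof (rule image_subsetI)
        fix D assume "D \<in> {D. D \<subseteq> S \<and> D \<noteq> {}}"
        then have "D \<subseteq> S" "D \<noteq> {}" by auto
        moreover have "finite S" unfolding S_def by auto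
        ultimately have "card D \<le> N" "card D > 0" unfolding N_def
          by (auto intro: card_mono simp: card_gt_0_iff finite_subset)
        then show "card D - 1 \<in> {..<N}" by simp
      qed
    qed simp
    also have "\<dots> = (\<Sum>j<N. int (N choose Suc j) * (-1::int)^(j+r) * int (j choose r))"
    proof (rule sum.cong[OF refl])
      fix j
      have eq: "{D \<in> {D. D \<subseteq> S \<and> D \<noteq> {}}. card D - 1 = j} = {D. D \<subseteq> S \<and> card D = Suc j}"
        using finS by auto (metis Suc_pred card_gt_0_iff empty_iff finite_subset)
      have "(\<Sum>D\<in>{D \<in> {D. D \<subseteq> S \<and> D \<noteq> {}}. card D - 1 = j}. (-1::int)^(card D - 1 + r) * int ((card D - 1) choose r))
          = (\<Sum>D\<in>{D. D \<subseteq> S \<and> card D = Suc j}. (-1::int)^(j + r) * int (j choose r))"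
        unfolding eq by (rule sum.cong) auto
      also have "\<dots> = int (N choose Suc j) * (-1::int)^(j+r) * int (j choose r)"
        using n_subsets[of S "Suc j"] unfolding N_def S_def by simp
      finally show "(\<Sum>D\<in>{D \<in> {D. D \<subseteq> S \<and> D \<noteq> {}}. card D - 1 = j}. (-1::int)^(card D - 1 + r) * int ((card D - 1) choose r))
          = int (N choose Suc j) * (-1::int)^(j+r) * int (j choose r)" .
    qed
    also have "\<dots> = (if r < N then 1 else 0)" by (rule S_id)
    also have "\<dots> = (if card B \<le> i then 1 else 0)"
    proof -
      have "B \<noteq> {1..n}" using B pi unfolding proper_ideal_def by auto
      then have "card B < n" using Bn by (metis card_atLeastAtMost diff_Suc_1 finite_atLeastAtMost psubset_card_mono psubset_eq)
      then show ?thesis using NS ir unfolding r_def by auto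
    qed
    finally show "(\<Sum>C\<in>Cs B. t (B,C)) = (if card B \<le> i then 1 else 0)" .
  qed
  also have "\<dots> = int (card {B\<in>\<Delta>. card B \<le> i})"
    using finD by (simp add: sum.If_cases Collect_conj_eq Int_commute Collect_mem_eq)
  finally show ?thesis .
qed

lemma H_step:
  assumes "finite \<Delta>"
  shows "int (card {B\<in>\<Delta>. card B \<le> Suc i}) = int (card {B\<in>\<Delta>. card B \<le> i}) + int (card {B\<in>\<Delta>. card B = Suc i})"
proof -
  have "{B\<in>\<Delta>. card B \<le> Suc i} = {B\<in>\<Delta>. card B \<le> i} \<union> {B\<in>\<Delta>. card B = Suc i}" by auto
  moreover have "card ({B\<in>\<Delta>. card B \<le> i} \<union> {B\<in>\<Delta>. card B = Suc i}) = card {B\<in>\<Delta>. card B \<le> i} + card {B\<in>\<Delta>. card B = Suc i}"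
    by (rule card_Un_disjoint) (use assms in auto)
  ultimately show ?thesis by simp
qed

theorem corollary13:
  fixes n k :: nat and f :: "nat \<Rightarrow> nat"
  assumes "n \<ge> 2" and "1 \<le> k" and "k \<le> (n - 1) div 2"
    and "f 0 = 1" and "f 1 = n" and "K_sequence k f"
  shows "\<exists>\<Delta>. proper_ideal n \<Delta> \<and> bier_f n \<Delta> 1 = 2 * n \<and>
           (\<forall>i\<le>k. bier_g n \<Delta> i = int (f i)) \<and>
           (\<forall>i. k < i \<and> i \<le> (n - 1) div 2 \<longrightarrow> bier_g n \<Delta> i = 0)"
proof -
  obtain K where sc: "simplicial_complex K" and fK: "\<forall>j\<le>k. card {F\<in>K. card F = j} = f j"
    and cK: "\<forall>F\<in>K. card F \<le> k"
    using assms(6) unfolding K_sequence_def by blast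
  have finK: "finite K" and eK: "{} \<in> K" and fF: "\<forall>F\<in>K. finite F"
    and clK: "\<forall>F\<in>K. \<forall>G. G \<subseteq> F \<longrightarrow> G \<in> K"
    using sc unfolding simplicial_complex_def by auto
  define V where "V = \<Union>K"
  have finV: "finite V" unfolding V_def using finK fF by auto
  have "{F\<in>K. card F = 1} = (\<lambda>v. {v}) ` V"
  proof
    show "{F\<in>K. card F = 1} \<subseteq> (\<lambda>v. {v}) ` V"
      unfolding V_def by (auto simp: card_1_singleton_iff)
    show "(\<lambda>v. {v}) ` V \<subseteq> {F\<in>K. card F = 1}"
      unfolding V_def using clK by auto
  qed
  then have "card V = n" using fK assms(2,5) by (metis card_image inj_singleton inj_on_subset subset_UNIV)
  then obtain \<sigma> where bij: "bij_betw \<sigma> V {1..n}"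
    using finite_same_card_bij[OF finV, of "{1..n}"] by auto
  have injV: "inj_on \<sigma> V" and imV: "\<sigma> ` V = {1..n}" using bij unfolding bij_betw_def by auto
  have FV: "F \<subseteq> V" if "F \<in> K" for F using that unfolding V_def by auto
  have cardim: "card (\<sigma> ` F) = card F" if "F \<in> K" for F
    using card_image[OF inj_on_subset[OF injV FV[OF that]]] .
  have injK: "inj_on ((`) \<sigma>) K" using inj_on_image[of \<sigma> K] injV unfolding V_def by simp
  define \<Delta> where "\<Delta> = (`) \<sigma> ` K"
  have finD: "finite \<Delta>" unfolding \<Delta>_def using finK by simp
  have cnt: "card {A\<in>\<Delta>. P (card A)} = card {F\<in>K. P (card F)}" for P
  proof -
    have "{A\<in>\<Delta>. P (card A)} = (`) \<sigma> ` {F\<in>K. P (card F)}"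
      unfolding \<Delta>_def using cardim by auto
    then show ?thesis by (simp add: card_image inj_on_subset[OF injK])
  qed
  have cD: "\<forall>A\<in>\<Delta>. card A \<le> k" unfolding \<Delta>_def using cardim cK by auto
  have kn: "k < n" using assms(1,3) by linarith
  have pi: "proper_ideal n \<Delta>"
    unfolding proper_ideal_def
  proof (intro conjI)
    show "\<Delta> \<noteq> {}" unfolding \<Delta>_def using eK by auto
    show "\<forall>A\<in>\<Delta>. A \<subseteq> {1..n}" unfolding \<Delta>_def using FV imV by auto
    show "\<forall>A\<in>\<Delta>. \<forall>B. B \<subseteq> A \<longrightarrow> B \<in> \<Delta>"
    proof (intro ballI allI impI)
      fix A B assume "A \<in> \<Delta>" "B \<subseteq> A"
      then obtain F where F: "F \<in> K" "A = \<sigma> ` F" unfolding \<Delta>_def by auto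
      define G where "G = {x\<in>F. \<sigma> x \<in> B}"
      have "G \<in> K" using clK F unfolding G_def by auto
      moreover have "\<sigma> ` G = B" unfolding G_def using \<open>B \<subseteq> A\<close> F by auto
      ultimately show "B \<in> \<Delta>" unfolding \<Delta>_def by auto
    qed
    show "{1..n} \<notin> \<Delta>" using cD kn by fastforce
  qed
  have hD: "bier_h n \<Delta> i = int (card {B\<in>\<Delta>. card B \<le> i})" if "i \<le> (n-1) div 2" for i
    using h_special[OF pi cD assms(3) that] .
  have g0: "bier_g n \<Delta> 0 = int (f 0)"
  proof -
    have "bier_g n \<Delta> 0 = int (card {B\<in>\<Delta>. card B \<le> 0})" using hD[of 0] by simp
    also have "\<dots> = int (card {F\<in>K. card F = 0})" using cnt[of "\<lambda>c. c \<le> 0"] by simp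
    finally show ?thesis using fK by simp
  qed
  have gS: "bier_g n \<Delta> (Suc i) = int (card {F\<in>K. card F = Suc i})" if "Suc i \<le> (n-1) div 2" for i
    using hD[of "Suc i"] hD[of i] that H_step[OF finD, of i] cnt[of "\<lambda>c. c = Suc i"] by simp
  have part1: "\<forall>i\<le>k. bier_g n \<Delta> i = int (f i)"
  proof (intro allI impI)
    fix i assume "i \<le> k"
    then show "bier_g n \<Delta> i = int (f i)"
      using g0 gS fK assms(3) by (cases i) auto
  qed
  have part2: "\<forall>i. k < i \<and> i \<le> (n - 1) div 2 \<longrightarrow> bier_g n \<Delta> i = 0"
  proof (intro allI impI)
    fix i assume a: "k < i \<and> i \<le> (n - 1) div 2"
    then obtain j where j: "i = Suc j" by (cases i) auto
    have "{F\<in>K. card F = Suc j} = {}" using cK a j by fastforce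
    then have "card {F\<in>K. card F = Suc j} = 0" by (metis card.empty)
    then show "bier_g n \<Delta> i = 0" using gS[of j] a j by simp
  qed
  have vert: "bier_f n \<Delta> 1 = 2 * n"
  proof -
    define A1 where "A1 = (\<lambda>B. (B, {1..n})) ` {B\<in>\<Delta>. card B = 1}"
    define A2 where "A2 = (\<lambda>C. ({}::nat set, C)) ` {C. C \<subseteq> {1..n} \<and> card C = n - 1}"
    have eD: "{} \<in> \<Delta>" unfolding \<Delta>_def using eK by force
    have "{p \<in> PP n \<Delta>. ww n p = 1} = A1 \<union> A2"
    proof
      show "{p \<in> PP n \<Delta>. ww n p = 1} \<subseteq> A1 \<union> A2"
      proof (rule subsetI)
        fix q assume q: "q \<in> {p \<in> PP n \<Delta>. ww n p = 1}"
        obtain B C where qBC: "q = (B,C)" by fastforce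
        have p: "(B,C) \<in> PP n \<Delta>" "ww n (B,C) = 1" using q qBC by auto
        have C: "C \<subseteq> {1..n}" and BC: "B \<subseteq> C" "B \<noteq> C" "B \<in> \<Delta>" using p unfolding PP_def by auto
        have fC: "finite C" using C finite_subset by blast
        then have "card B < card C" using BC by (simp add: psubset_card_mono psubset_eq)
        have Cn: "card C \<le> n" using card_mono[OF _ C] by simp
        have w: "card B + n - card C = 1" using p(2) unfolding ww_def by simp
        show "q \<in> A1 \<union> A2"
        proof (cases "card B = 0")
          case True
          have "finite B" using fC BC(1) finite_subset by blast
          then have "B = {}" using True by simp
          moreover have "card C = n - 1" using w True by simp
          ultimately show ?thesis unfolding A2_def using C qBC by auto
        next
          case False
          then have "card B = 1" "card C = n" using w Cn by auto
          then have "C = {1..n}" using C by (metis card_atLeastAtMost card_subset_eq diff_Suc_1 finite_atLeastAtMost)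
          then show ?thesis unfolding A1_def using \<open>card B = 1\<close> BC qBC by auto
        qed
      qed
      show "A1 \<union> A2 \<subseteq> {p \<in> PP n \<Delta>. ww n p = 1}"
      proof
        fix p assume "p \<in> A1 \<union> A2"
        then show "p \<in> {p \<in> PP n \<Delta>. ww n p = 1}"
        proof
          assume "p \<in> A1"
          then obtain B where B: "p = (B, {1..n})" "B \<in> \<Delta>" "card B = 1" unfolding A1_def by auto
          have "B \<subseteq> {1..n}" using pi B unfolding proper_ideal_def by auto
          then show ?thesis using B pi unfolding PP_def ww_def proper_ideal_def by auto
        next
          assume "p \<in> A2"
          then obtain C where C: "p = ({}, C)" "C \<subseteq> {1..n}" "card C = n - 1" unfolding A2_def by auto
          have "C \<notin> \<Delta>" using cD C assms(1,2,3) by fastforce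
          then show ?thesis using C eD assms(1) unfolding PP_def ww_def by auto
        qed
      qed
    qed
    moreover have "card A1 = n"
    proof -
      have "card A1 = card {B\<in>\<Delta>. card B = 1}" unfolding A1_def by (rule card_image) (auto intro: inj_onI)
      also have "\<dots> = card {F\<in>K. card F = 1}" using cnt[of "\<lambda>c. c = 1"] by simp
      finally show ?thesis using fK assms(2,5) by simp
    qed
    moreover have "card A2 = n"
    proof -
      have "card A2 = card {C. C \<subseteq> {1..n} \<and> card C = n - 1}" unfolding A2_def by (rule card_image) (auto intro: inj_onI)
      also have "\<dots> = n choose (n - 1)" using n_subsets[of "{1..n}" "n - 1"] by simp
      also have "\<dots> = n" using assms(1) by (simp add: binomial_symmetric[symmetric])
      finally show ?thesis .
    qed
    moreover have "A1 \<inter> A2 = {}" unfolding A1_def A2_def by auto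
    moreover have "finite A1" "finite A2" unfolding A1_def A2_def using finD by auto
    ultimately show ?thesis using bier_f_PP[OF pi, of 1] by (simp add: card_Un_disjoint)
  qed
  show ?thesis using pi vert part1 part2 by blast
qed

end
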